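(* For each $n\in\omega$ the set $N_n:=\{x\in 3^\omega: x(i)\neq 2 \text{ for all } i\geq n\}$ is $\mathbb{T}$-nowhere dense, but $\bigcup_{n\in\omega}N_n$ is not $\mathbb{T}$-nowhere dense.
   Context: $\mathbb{T}$ is the tree-forcing (ordered by inclusion) consisting of perfect trees $p\subseteq 3^{<\omega}$ together with a set $A_p\subseteq\omega$ (the splitting levels of $p$) such that: for every $t\in p$, $|t|\in A_p$ iff $t$ is a splitting node of $p$; every splitting node $t$ is fully splitting (i.e. $t^\frown i\in p$ for every $i\in 3$); for every $s\supseteq \mathrm{stem}(p)$ which is not splitting, $s^\frown 2\notin p$; and for all non-splitting $s,t\in p$ with $|s|=|t|$ and all $i\in 2$, $s^\frown i\in p\Leftrightarrow t^\frown i\in p$. Here $s^\frown i$ denotes $s$ extended by the value $i$. A set $X$ is $\mathbb{T}$-nowhere dense if for every $p\in\mathbb{T}$ there is $q\leq p$ with $[q]\cap X=\emptyset$, where $[q]$ is the set of branches of $q$. *)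

theory Defs
  imports Main "HOL-Library.Sublist"
begin

definition seq3 :: "nat list set" where
  "seq3 = {s. \<forall>i\<in>set s. i < 3}"

definition cantor3 :: "(nat \<Rightarrow> nat) set" where
  "cantor3 = {x. \<forall>n. x n < 3}"

definition is_tree :: "nat list set \<Rightarrow> bool" where
  "is_tree p \<longleftrightarrow> p \<subseteq> seq3 \<and> p \<noteq> {} \<and> (\<forall>s\<in>p. \<forall>t. prefix t s \<longrightarrow> t \<in> p)"

definition splitting :: "nat list set \<Rightarrow> nat list \<Rightarrow> bool" where
  "splitting p t \<longleftrightarrow> t \<in> p \<and> (\<exists>i j. i \<noteq> j \<and> t @ [i] \<in> p \<and> t @ [j] \<in> p)"

definition fully_splitting :: "nat list set \<Rightarrow> nat list \<Rightarrow> bool" where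
  "fully_splitting p t \<longleftrightarrow> (\<forall>i<3. t @ [i] \<in> p)"

definition perfect_tree :: "nat list set \<Rightarrow> bool" where
  "perfect_tree p \<longleftrightarrow> is_tree p \<and> (\<forall>s\<in>p. \<exists>t\<in>p. prefix s t \<and> splitting p t)"

definition stem :: "nat list set \<Rightarrow> nat list" where
  "stem p = (THE t. splitting p t \<and> (\<forall>u\<in>p. prefix u t \<or> prefix t u))"

definition T_forcing :: "(nat list set \<times> nat set) set" where
  "T_forcing = {(p, A). perfect_tree p
     \<and> (\<forall>t\<in>p. length t \<in> A \<longleftrightarrow> splitting p t)
     \<and> (\<forall>t. splitting p t \<longrightarrow> fully_splitting p t)
     \<and> (\<forall>s\<in>p. prefix (stem p) s \<and> \<not> splitting p s \<longrightarrow> s @ [2] \<notin> p)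
     \<and> (\<forall>s\<in>p. \<forall>t\<in>p. \<not> splitting p s \<and> \<not> splitting p t \<and> length s = length t
          \<longrightarrow> (\<forall>i<2. s @ [i] \<in> p \<longleftrightarrow> t @ [i] \<in> p))}"

definition T_le :: "(nat list set \<times> nat set) \<Rightarrow> (nat list set \<times> nat set) \<Rightarrow> bool" where
  "T_le q p \<longleftrightarrow> fst q \<subseteq> fst p"

definition branches :: "nat list set \<Rightarrow> (nat \<Rightarrow> nat) set" where
  "branches p = {x \<in> cantor3. \<forall>n. map x [0..<n] \<in> p}"

definition T_nowhere_dense :: "(nat \<Rightarrow> nat) set \<Rightarrow> bool" where
  "T_nowhere_dense X \<longleftrightarrow>
     (\<forall>p\<in>T_forcing. \<exists>q\<in>T_forcing. T_le q p \<and> branches (fst q) \<inter> X = {})"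

definition N_set :: "nat \<Rightarrow> (nat \<Rightarrow> nat) set" where
  "N_set n = {x \<in> cantor3. \<forall>i\<ge>n. x i \<noteq> 2}"

end

theory Submission
  imports Defs
begin

lemma prefix_length_eq: "length xs = length ys \<Longrightarrow> prefix xs ys \<Longrightarrow> xs = ys"
  by (auto simp: prefix_def)

lemma prefix_nth: "prefix a b \<Longrightarrow> i < length a \<Longrightarrow> a ! i = b ! i"
  by (auto simp: prefix_def nth_append)

lemma comp_children_unique:
  assumes "prefix (t@[i]) x \<or> prefix x (t@[i])" "prefix (t@[j]) x \<or> prefix x (t@[j])"
    "prefix t x" "x \<noteq> t"
  shows "i = j"
proof -
  obtain c cs where x: "x = t @ c # cs" using assms(3,4)
    by (metis append.right_neutral neq_Nil_conv prefixE)
  show ?thesis using assms(1,2) unfolding x by (auto simp: prefix_def)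
qed

lemma stem_below:
  assumes "splitting p t" "\<forall>u\<in>p. prefix u x \<or> prefix x u"
  shows "prefix x t"
proof (rule ccontr)
  assume n: "\<not> prefix x t"
  obtain i j where ij: "i \<noteq> j" "t@[i] \<in> p" "t@[j] \<in> p" "t \<in> p"
    using assms(1) unfolding splitting_def by blast
  have "prefix t x" using assms(2) ij(4) n by auto
  moreover have "x \<noteq> t" using n by auto
  moreover have "prefix (t@[i]) x \<or> prefix x (t@[i])" using assms(2) ij(2) by blast
  moreover have "prefix (t@[j]) x \<or> prefix x (t@[j])" using assms(2) ij(3) by blast
  ultimately have "i = j" by (rule comp_children_unique[rotated 2])
  thus False using ij by simp
qed

lemma tree_prefix: "is_tree p \<Longrightarrow> s \<in> p \<Longrightarrow> prefix t s \<Longrightarrow> t \<in> p"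
  unfolding is_tree_def by blast

lemma stem_exists:
  assumes "perfect_tree p"
  shows "splitting p (stem p) \<and> (\<forall>u\<in>p. prefix u (stem p) \<or> prefix (stem p) u)"
proof -
  have tr: "is_tree p" using assms perfect_tree_def by blast
  then obtain s where "s \<in> p" unfolding is_tree_def by blast
  then have "\<exists>t. splitting p t" using assms unfolding perfect_tree_def by blast
  then have ex: "\<exists>k t. splitting p t \<and> length t = k" by blast
  define k where "k = (LEAST k. \<exists>t. splitting p t \<and> length t = k)"
  obtain s0 where s0: "splitting p s0" "length s0 = k"
    using LeastI_ex[OF ex] unfolding k_def by blast
  have min: "length t \<ge> k" if "splitting p t" for t
    unfolding k_def using that by (auto intro!: Least_le)
  have comp: "\<forall>u\<in>p. prefix u s0 \<or> prefix s0 u"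
  proof
    fix u assume u: "u \<in> p"
    show "prefix u s0 \<or> prefix s0 u"
    proof (rule ccontr)
      assume "\<not> (prefix u s0 \<or> prefix s0 u)"
      then have "u \<parallel> s0" by (simp add: parallel_def)
      then obtain as b bs c cs where d: "b \<noteq> c" "u = as @ b # bs" "s0 = as @ c # cs"
        using parallel_decomp by blast
      have "as @ [b] \<in> p" using tree_prefix[OF tr u] d by (auto simp: prefix_def)
      moreover have "s0 \<in> p" using s0 splitting_def by blast
      then have "as @ [c] \<in> p" using tree_prefix[OF tr] d by (auto simp: prefix_def)
      moreover have "as \<in> p" using tree_prefix[OF tr u] d by (auto simp: prefix_def)
      ultimately have "splitting p as" using d unfolding splitting_def by blast
      then have "length as \<ge> k" using min by blast
      thus False using d s0 by simp
    qed
  qed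
  have "stem p = s0" unfolding stem_def
  proof (rule the_equality)
    show "splitting p s0 \<and> (\<forall>u\<in>p. prefix u s0 \<or> prefix s0 u)" using s0 comp by blast
  next
    fix t assume t: "splitting p t \<and> (\<forall>u\<in>p. prefix u t \<or> prefix t u)"
    have "prefix t s0" using stem_below s0 t by blast
    moreover have "prefix s0 t" using stem_below t comp by blast
    ultimately show "t = s0" using prefix_order.antisym by blast
  qed
  thus ?thesis using s0 comp by simp
qed


lemma full_in: "(seq3, UNIV) \<in> T_forcing"
proof -
  have e: "[] \<in> seq3" by (simp add: seq3_def)
  have ne: "seq3 \<noteq> {}" using e by blast
  have pc: "\<forall>s\<in>seq3. \<forall>t. prefix t s \<longrightarrow> t \<in> seq3"
    by (auto simp: seq3_def prefix_def)
  have tr: "is_tree seq3" unfolding is_tree_def using ne pc by blast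
  have sp: "splitting seq3 t" if "t \<in> seq3" for t
  proof -
    have "t @ [0] \<in> seq3" "t @ [1] \<in> seq3" using that by (auto simp: seq3_def)
    then show ?thesis unfolding splitting_def using that
      by (metis zero_neq_one)
  qed
  have fs: "fully_splitting seq3 t" if "t \<in> seq3" for t
    using that unfolding fully_splitting_def seq3_def by auto
  have "perfect_tree seq3" unfolding perfect_tree_def using tr sp by blast
  moreover have "\<forall>t. splitting seq3 t \<longrightarrow> fully_splitting seq3 t"
    using fs splitting_def by blast
  ultimately show ?thesis unfolding T_forcing_def using sp by auto
qed

lemma perfect_child:
  assumes "perfect_tree p" "s \<in> p"
  shows "\<exists>i. s @ [i] \<in> p"
proof -
  have tr: "is_tree p" using assms perfect_tree_def by blast
  obtain u where u: "u \<in> p" "prefix s u" "splitting p u"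
    using assms unfolding perfect_tree_def by blast
  show ?thesis
  proof (cases "u = s")
    case True
    then show ?thesis using u splitting_def by blast
  next
    case False
    then obtain c cs where "u = s @ c # cs" using u(2)
      by (metis append.right_neutral neq_Nil_conv prefixE)
    then have "prefix (s @ [c]) u" by (simp add: prefix_def)
    then show ?thesis using tree_prefix[OF tr u(1)] by blast
  qed
qed

lemma part2:
  assumes q: "q \<in> T_forcing"
  shows "branches (fst q) \<inter> (\<Union>n. N_set n) \<noteq> {}"
proof -
  obtain p A where qpA: "q = (p, A)" by (cases q)
  have qq: "(p, A) \<in> T_forcing" using q qpA by simp
  note P = qq[unfolded T_forcing_def mem_Collect_eq case_prod_conv]
  have pf: "perfect_tree p" using P by (rule conjunct1)
  have tr: "is_tree p" using pf perfect_tree_def by blast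
  have c4: "\<forall>s\<in>p. prefix (stem p) s \<and> \<not> splitting p s \<longrightarrow> s @ [2] \<notin> p"
    using P by (elim conjE)
  have fsp: "\<forall>t. splitting p t \<longrightarrow> fully_splitting p t"
    using P by (elim conjE)
  have st: "splitting p (stem p)" using stem_exists[OF pf] by blast
  then have stp: "stem p \<in> p" using splitting_def by blast
  define nx where "nx s = (if splitting p s then 0 else (SOME i. s @ [i] \<in> p))" for s
  have nx: "s @ [nx s] \<in> p \<and> nx s \<noteq> 2" if "s \<in> p" "prefix (stem p) s" for s
  proof (cases "splitting p s")
    case True
    then show ?thesis using fsp unfolding nx_def fully_splitting_def by auto
  next
    case False
    have "s @ [nx s] \<in> p" unfolding nx_def using False perfect_child[OF pf that(1)]
      by (auto intro: someI_ex)
    moreover have "nx s \<noteq> 2"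
    proof
      assume "nx s = 2"
      then have "s @ [2] \<in> p" using calculation by simp
      then show False using c4 that False by blast
    qed
    ultimately show ?thesis by blast
  qed
  define f where "f = rec_nat (stem p) (\<lambda>k s. s @ [nx s])"
  have f0: "f 0 = stem p" and fS: "f (Suc k) = f k @ [nx (f k)]" for k
    unfolding f_def by auto
  have finv: "f k \<in> p \<and> prefix (stem p) (f k) \<and> length (f k) = length (stem p) + k" for k
  proof (induction k)
    case 0 then show ?case using f0 stp by simp
  next
    case (Suc k) then show ?case using fS nx[of "f k"] by (auto simp: prefix_def)
  qed
  have fmono: "prefix (f k) (f (k + d))" for k d
  proof (induction d)
    case 0 then show ?case by simp
  next
    case (Suc d) then show ?case using fS[of "k + d"] by (auto simp: prefix_def)
  qed
  have fnth: "f k ! i = f m ! i" if "i < length (f k)" "i < length (f m)" for k m i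
  proof (cases "k \<le> m")
    case True
    then obtain d where "m = k + d" using le_Suc_ex by blast
    then show ?thesis using prefix_nth[OF fmono[of k d]] that by simp
  next
    case False
    then have "m \<le> k" by simp
    then obtain d where "k = m + d" using le_Suc_ex by blast
    then show ?thesis using prefix_nth[OF fmono[of m d]] that by simp
  qed
  define x where "x i = f (Suc i) ! i" for i
  have xf: "x i = f m ! i" if "i < length (f m)" for i m
    unfolding x_def using fnth[of i "Suc i" m] finv[of "Suc i"] that by simp
  have mapx: "map x [0..<n] = take n (f n)" for n
  proof (rule nth_equalityI)
    show "length (map x [0..<n]) = length (take n (f n))" using finv[of n] by simp
  next
    fix i assume "i < length (map x [0..<n])"
    then show "map x [0..<n] ! i = take n (f n) ! i" using xf[of i n] finv[of n] by simp
  qed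
  have seq: "p \<subseteq> seq3" using tr unfolding is_tree_def by (elim conjE)
  have xlt: "x i < 3" for i
  proof -
    have "f (Suc i) \<in> p" using finv[of "Suc i"] by (rule conjunct1)
    then have "f (Suc i) \<in> seq3" using seq by (rule rev_subsetD)
    then have "\<forall>j\<in>set (f (Suc i)). j < 3" unfolding seq3_def by (rule CollectD)
    moreover have "i < length (f (Suc i))" using finv[of "Suc i"] by simp
    ultimately show ?thesis unfolding x_def by (simp add: nth_mem)
  qed
  have xn2: "x i \<noteq> 2" if "i \<ge> length (stem p)" for i
  proof -
    define k where "k = i - length (stem p)"
    have lk: "length (f k) = i" using finv[of k] that k_def by simp
    have "x i = f (Suc k) ! i" using xf[of i "Suc k"] finv[of "Suc k"] that k_def by simp
    also have "\<dots> = nx (f k)" using fS[of k] by (simp add: lk[symmetric])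
    finally show ?thesis using nx[of "f k"] finv[of k] by simp
  qed
  have "x \<in> branches p"
  proof -
    have "map x [0..<n] \<in> p" for n
      using mapx[of n] tree_prefix[OF tr, of "f n" "take n (f n)"] finv[of n] take_is_prefix
      by metis
    then show ?thesis unfolding branches_def cantor3_def using xlt by auto
  qed
  moreover have "x \<in> N_set (length (stem p))"
    unfolding N_set_def cantor3_def using xlt xn2 by auto
  ultimately show ?thesis using qpA by auto
qed


lemma deep_split:
  assumes "perfect_tree p"
  shows "\<exists>t. splitting p t \<and> length t \<ge> n"
proof (induction n)
  case 0
  have tr: "is_tree p" using assms perfect_tree_def by blast
  then obtain s where "s \<in> p" unfolding is_tree_def by blast
  then show ?case using assms unfolding perfect_tree_def by blast
next
  case (Suc n)
  then obtain t where t: "splitting p t" "length t \<ge> n" by blast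
  then obtain i where "t @ [i] \<in> p" unfolding splitting_def by blast
  then obtain u where "prefix (t @ [i]) u" "splitting p u"
    using assms unfolding perfect_tree_def by blast
  then have "length u \<ge> Suc n" using t(2) prefix_length_le by fastforce
  then show ?case using \<open>splitting p u\<close> by blast
qed

lemma part1:
  assumes pA: "(p, A) \<in> T_forcing"
  shows "\<exists>q\<in>T_forcing. T_le q (p, A) \<and> branches (fst q) \<inter> N_set n = {}"
proof -
  note P = pA[unfolded T_forcing_def mem_Collect_eq case_prod_conv]
  have pf: "perfect_tree p" using P by (rule conjunct1)
  have tr: "is_tree p" using pf perfect_tree_def by blast
  have lev: "\<forall>t\<in>p. length t \<in> A \<longleftrightarrow> splitting p t" using P by (elim conjE)
  have fsp: "\<forall>t. splitting p t \<longrightarrow> fully_splitting p t" using P by (elim conjE)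
  have c4: "\<forall>s\<in>p. prefix (stem p) s \<and> \<not> splitting p s \<longrightarrow> s @ [2] \<notin> p"
    using P by (elim conjE)
  have c5: "\<forall>s\<in>p. \<forall>t\<in>p. \<not> splitting p s \<and> \<not> splitting p t \<and> length s = length t
          \<longrightarrow> (\<forall>i<2. s @ [i] \<in> p \<longleftrightarrow> t @ [i] \<in> p)" using P by (elim conjE)
  obtain t where t: "splitting p t" "length t \<ge> n" using deep_split[OF pf] by blast
  define t2 where "t2 = t @ [2]"
  have t2p: "t2 \<in> p" using fsp t unfolding t2_def fully_splitting_def by auto
  have lt2: "length t2 = Suc (length t)" unfolding t2_def by simp
  have stp: "prefix (stem p) t" using stem_below[OF t(1)] stem_exists[OF pf] by blast
  define q where "q = {s\<in>p. prefix s t2 \<or> prefix t2 s}"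
  define B where "B = {k\<in>A. k > length t}"
  have qp: "q \<subseteq> p" unfolding q_def by blast
  have K1: "length s > length t \<longleftrightarrow> prefix t2 s" if "s \<in> q" for s
  proof
    assume l: "length s > length t"
    show "prefix t2 s"
    proof (cases "prefix t2 s")
      case False
      then have "prefix s t2" using that q_def by blast
      moreover have "length s \<ge> length t2" using l lt2 by simp
      ultimately have "s = t2" using prefix_length_le prefix_length_eq by (metis le_antisym)
      then show ?thesis by simp
    qed
  next
    assume "prefix t2 s"
    then show "length s > length t" using prefix_length_le lt2 by fastforce
  qed
  have childpre: "prefix (v @ [i]) t2" if "v @ [i] \<in> q" "length v \<le> length t" for v i
  proof (cases "prefix t2 (v @ [i])")
    case True
    then have "length t2 \<le> length (v @ [i])" using prefix_length_le by blast
    then have "length t2 = length (v @ [i])" using that(2) lt2 by simp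
    then have "t2 = v @ [i]" using True prefix_length_eq by blast
    then show ?thesis by simp
  next
    case False
    then show ?thesis using that q_def by blast
  qed
  have K3: "prefix t2 v" if sv: "splitting q v" for v
  proof (rule ccontr)
    assume nv: "\<not> prefix t2 v"
    obtain i j where ij: "i \<noteq> j" "v @ [i] \<in> q" "v @ [j] \<in> q" "v \<in> q"
      using sv unfolding splitting_def by blast
    have "length v \<le> length t" using K1[OF ij(4)] nv by simp
    then have a: "prefix (v @ [i]) t2" "prefix (v @ [j]) t2"
      using childpre[OF ij(2)] childpre[OF ij(3)] by simp_all
    have "(v @ [i]) ! length v = t2 ! length v" using prefix_nth[OF a(1), of "length v"] by simp
    moreover have "(v @ [j]) ! length v = t2 ! length v" using prefix_nth[OF a(2), of "length v"] by simp
    ultimately have "i = j" by simp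
    then show False using ij by simp
  qed
  have K2: "splitting q v \<longleftrightarrow> splitting p v" if "v \<in> q" "prefix t2 v" for v
  proof
    assume "splitting q v" then show "splitting p v" using qp unfolding splitting_def by blast
  next
    assume "splitting p v"
    then obtain i j where ij: "i \<noteq> j" "v @ [i] \<in> p" "v @ [j] \<in> p"
      unfolding splitting_def by blast
    have "prefix t2 (v @ [i])" "prefix t2 (v @ [j])" using that(2) by (auto simp: prefix_def)
    then have "v @ [i] \<in> q" "v @ [j] \<in> q" using ij q_def by auto
    then show "splitting q v" using ij that(1) unfolding splitting_def by blast
  qed
  have trq: "is_tree q"
  proof -
    have "p \<subseteq> seq3" using tr unfolding is_tree_def by (elim conjE)
    then have "q \<subseteq> seq3" using qp by (rule subset_trans[rotated])
    moreover have "[] \<in> q"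
    proof -
      have "[] \<in> p" using tree_prefix[OF tr t2p] by simp
      then show ?thesis unfolding q_def by simp
    qed
    moreover have "\<forall>s\<in>q. \<forall>r. prefix r s \<longrightarrow> r \<in> q"
    proof (intro ballI allI impI)
      fix s r assume s: "s \<in> q" and r: "prefix r s"
      have sp: "s \<in> p" using s qp by blast
      have "r \<in> p" using tree_prefix[OF tr sp r] .
      moreover have "prefix r t2 \<or> prefix t2 r"
      proof -
        have "prefix s t2 \<or> prefix t2 s" using s unfolding q_def by blast
        then show ?thesis
        proof
          assume "prefix s t2" then show ?thesis using r prefix_order.trans by blast
        next
          assume "prefix t2 s" then show ?thesis using r prefix_same_cases by blast
        qed
      qed
      ultimately show "r \<in> q" unfolding q_def by blast
    qed
    ultimately show ?thesis unfolding is_tree_def by (intro conjI) auto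
  qed
  have pfq: "perfect_tree q"
    unfolding perfect_tree_def
  proof (intro conjI trq ballI)
    fix s assume s: "s \<in> q"
    define s' where "s' = (if prefix s t2 then t2 else s)"
    have s'q: "s' \<in> q" "prefix t2 s'" "prefix s s'"
      using s t2p unfolding s'_def q_def by auto
    obtain u where u: "u \<in> p" "prefix s' u" "splitting p u"
      using pf s'q qp unfolding perfect_tree_def by blast
    have "prefix t2 u" using u s'q prefix_order.trans by blast
    then have uq: "u \<in> q" using u q_def by blast
    then have "splitting q u" using K2 \<open>prefix t2 u\<close> u by blast
    then show "\<exists>u\<in>q. prefix s u \<and> splitting q u"
      using uq u s'q prefix_order.trans by blast
  qed
  have stq: "prefix t2 (stem q)" using K3 stem_exists[OF pfq] by blast
  have lev_q: "\<forall>v\<in>q. length v \<in> B \<longleftrightarrow> splitting q v"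
  proof
    fix v assume v: "v \<in> q"
    have vp: "v \<in> p" using v qp by blast
    show "length v \<in> B \<longleftrightarrow> splitting q v"
    proof (cases "prefix t2 v")
      case True
      then show ?thesis using K1[OF v] K2[OF v] lev vp unfolding B_def by auto
    next
      case False
      then show ?thesis using K1[OF v] K3 unfolding B_def by auto
    qed
  qed
  have fs_q: "\<forall>v. splitting q v \<longrightarrow> fully_splitting q v"
  proof (intro allI impI)
    fix v assume v: "splitting q v"
    have pv: "prefix t2 v" using K3 v by blast
    have vq: "v \<in> q" using v splitting_def by blast
    have "fully_splitting p v" using fsp K2[OF vq pv] v by blast
    moreover have "prefix t2 (v @ [i])" for i using pv by (auto simp: prefix_def)
    ultimately show "fully_splitting q v" unfolding fully_splitting_def q_def by blast
  qed
  have c4q: "\<forall>s\<in>q. prefix (stem q) s \<and> \<not> splitting q s \<longrightarrow> s @ [2] \<notin> q"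
  proof (intro ballI impI)
    fix s assume s: "s \<in> q" and h: "prefix (stem q) s \<and> \<not> splitting q s"
    have ts: "prefix t2 s" using stq h prefix_order.trans by blast
    have "\<not> splitting p s" using K2[OF s ts] h by blast
    moreover have "prefix (stem p) s" using stp ts unfolding t2_def
      by (metis prefix_order.trans prefix_prefix)
    moreover have "s \<in> p" using s qp by blast
    ultimately show "s @ [2] \<notin> q" using c4 qp by blast
  qed
  have c5q: "\<forall>s\<in>q. \<forall>u\<in>q. \<not> splitting q s \<and> \<not> splitting q u \<and> length s = length u
          \<longrightarrow> (\<forall>i<2. s @ [i] \<in> q \<longleftrightarrow> u @ [i] \<in> q)"
  proof (intro ballI impI)
    fix s u assume s: "s \<in> q" and u: "u \<in> q"
      and h: "\<not> splitting q s \<and> \<not> splitting q u \<and> length s = length u"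
    show "\<forall>i<2. s @ [i] \<in> q \<longleftrightarrow> u @ [i] \<in> q"
    proof (cases "prefix t2 s")
      case True
      then have tu: "prefix t2 u" using K1[OF s] K1[OF u] h by simp
      have nsp: "\<not> splitting p s" "\<not> splitting p u" using K2[OF s True] K2[OF u tu] h by blast+
      have sp: "s \<in> p" "u \<in> p" using s u qp by blast+
      have "s @ [i] \<in> q \<longleftrightarrow> s @ [i] \<in> p" "u @ [i] \<in> q \<longleftrightarrow> u @ [i] \<in> p" for i
        using True tu unfolding q_def by (auto simp: prefix_def)
      then show ?thesis using c5 sp nsp h by blast
    next
      case False
      then have tu: "\<not> prefix t2 u" using K1[OF s] K1[OF u] h by simp
      have "prefix s t2" "prefix u t2" using False tu s u q_def by blast+
      then have "s = u" using h by (metis prefix_same_cases prefix_length_eq)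
      then show ?thesis by simp
    qed
  qed
  have qT: "(q, B) \<in> T_forcing"
    unfolding T_forcing_def mem_Collect_eq case_prod_conv
    using pfq lev_q fs_q c4q c5q by blast
  have le: "T_le (q, B) (p, A)" unfolding T_le_def using qp by simp
  have "branches q \<inter> N_set n = {}"
  proof (rule ccontr)
    assume "branches q \<inter> N_set n \<noteq> {}"
    then obtain x where x: "x \<in> branches q" "x \<in> N_set n" by blast
    have m: "map x [0..<Suc (length t)] \<in> q" using x(1) branches_def by blast
    have "prefix t2 (map x [0..<Suc (length t)])" using K1[OF m] by simp
    then have "map x [0..<Suc (length t)] = t2" using lt2
      by (metis length_map length_upt minus_nat.diff_0 prefix_length_eq)
    then have "x (length t) = 2" unfolding t2_def
      by (metis nth_append_length length_map length_upt minus_nat.diff_0 nth_map_upt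
          add_0 lessI)
    then show False using x(2) t(2) unfolding N_set_def by auto
  qed
  then show ?thesis using qT le by (intro bexI[of _ "(q, B)"]) simp_all
qed

theorem mainTheorem3:
  shows "(\<forall>n. T_nowhere_dense (N_set n)) \<and> \<not> T_nowhere_dense (\<Union>n. N_set n)"
proof
  show "\<forall>n. T_nowhere_dense (N_set n)"
    unfolding T_nowhere_dense_def using part1 by fastforce
next
  show "\<not> T_nowhere_dense (\<Union>n. N_set n)"
    unfolding T_nowhere_dense_def using full_in part2 by blast
qed

end
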